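(* Let $F=F(a,b)$ be the free group on generators $a,b$. For every $n\ge 1$, $$[[a,_{2n}b],a]\equiv\Big[\prod_{i=0}^{n-1}\big[[a,_{2n-1-i}b],[a,_ib]\big]^{(-1)^i},\ b\Big]\mod\gamma_{2n+3}(F).$$
   Context: For group elements, $[x,y]=x^{-1}y^{-1}xy$; commutators are left-normalized, $[x_1,\dots,x_n]=[[x_1,\dots,x_{n-1}],x_n]$, and $[x,_0y]=x$, $[x,_{i+1}y]=[[x,_iy],y]$. $\gamma_k(F)$ is the lower central series: $\gamma_1(F)=F$, $\gamma_{k+1}(F)=[\gamma_k(F),F]$. *)

theory Defs
  imports "HOL-Algebra.Algebra"
begin

definition comm :: "('a, 'b) monoid_scheme \<Rightarrow> 'a \<Rightarrow> 'a \<Rightarrow> 'a" where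
  "comm G x y = inv\<^bsub>G\<^esub> x \<otimes>\<^bsub>G\<^esub> inv\<^bsub>G\<^esub> y \<otimes>\<^bsub>G\<^esub> x \<otimes>\<^bsub>G\<^esub> y"

primrec iter_comm :: "('a, 'b) monoid_scheme \<Rightarrow> 'a \<Rightarrow> 'a \<Rightarrow> nat \<Rightarrow> 'a" where
  "iter_comm G x y 0 = x"
| "iter_comm G x y (Suc i) = comm G (iter_comm G x y i) y"

text \<open>Lower central series: gamma_1 = G, gamma_(k+1) = [gamma_k, G]
  (subgroup generated by the commutators [x,y], x in gamma_k, y in G).
  gamma_0 is also set to G (irrelevant for the statement).\<close>
fun lcs :: "('a, 'b) monoid_scheme \<Rightarrow> nat \<Rightarrow> 'a set" where
  "lcs G 0 = carrier G"
| "lcs G (Suc 0) = carrier G"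
| "lcs G (Suc (Suc k)) =
     generate G {comm G x y | x y. x \<in> lcs G (Suc k) \<and> y \<in> carrier G}"

definition ordered_prod :: "('a, 'b) monoid_scheme \<Rightarrow> 'a list \<Rightarrow> 'a" where
  "ordered_prod G xs = foldr (\<lambda>x acc. x \<otimes>\<^bsub>G\<^esub> acc) xs \<one>\<^bsub>G\<^esub>"

definition cong_mod :: "('a, 'b) monoid_scheme \<Rightarrow> 'a set \<Rightarrow> 'a \<Rightarrow> 'a \<Rightarrow> bool" where
  "cong_mod G N x y \<longleftrightarrow> x \<otimes>\<^bsub>G\<^esub> inv\<^bsub>G\<^esub> y \<in> N"

text \<open>Letters are pairs (e, g): g = False is generator a, g = True is b;
  e = True means the inverse letter. Elements are freely reduced words.\<close>
type_synonym letter2 = "bool \<times> bool"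

definition inverse_letters :: "letter2 \<Rightarrow> letter2 \<Rightarrow> bool" where
  "inverse_letters x y \<longleftrightarrow> fst x \<noteq> fst y \<and> snd x = snd y"

definition reduced_word :: "letter2 list \<Rightarrow> bool" where
  "reduced_word w \<longleftrightarrow> (\<forall>i. Suc i < length w \<longrightarrow> \<not> inverse_letters (w ! i) (w ! Suc i))"

fun cons_red :: "letter2 \<Rightarrow> letter2 list \<Rightarrow> letter2 list" where
  "cons_red x [] = [x]"
| "cons_red x (y # ys) = (if inverse_letters x y then ys else x # y # ys)"

definition free_group2 :: "letter2 list monoid" where
  "free_group2 = \<lparr> carrier = {w. reduced_word w},
                   monoid.mult = (\<lambda>u v. foldr cons_red u v),
                   one = [] \<rparr>"

definition gen_a :: "letter2 list" where "gen_a = [(False, False)]"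
definition gen_b :: "letter2 list" where "gen_b = [(False, True)]"

end

theory Submission
  imports Defs
begin


lemma reduced_Nil[simp]: "reduced_word []" by (simp add: reduced_word_def)
lemma reduced_single[simp]: "reduced_word [x]" by (simp add: reduced_word_def)
lemma reduced_Cons2: "reduced_word (x # y # ys) \<longleftrightarrow> \<not> inverse_letters x y \<and> reduced_word (y # ys)"
  unfolding reduced_word_def
  apply (rule iffI)
   apply (intro conjI allI impI)
    apply (metis Suc_less_eq length_Cons nth_Cons_0 nth_Cons_Suc zero_less_Suc)
   apply (metis Suc_less_eq length_Cons nth_Cons_Suc)
  apply (intro allI impI)
  subgoal for i by (cases i) auto
  done

lemma reduced_Cons: "reduced_word (x # ys) \<longleftrightarrow> (ys = [] \<or> \<not> inverse_letters x (hd ys)) \<and> reduced_word ys"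
  by (cases ys) (auto simp: reduced_Cons2)

lemma reduced_cons_red: "reduced_word w \<Longrightarrow> reduced_word (cons_red x w)"
  by (cases w) (auto simp: reduced_Cons)

lemma reduced_foldr: "reduced_word w \<Longrightarrow> reduced_word (foldr cons_red u w)"
  by (induction u) (auto simp: reduced_cons_red)

lemma cons_red_cancel:
  assumes "inverse_letters x y" "reduced_word z"
  shows "cons_red x (cons_red y z) = z"
proof (cases z)
  case Nil then show ?thesis using assms by auto
next
  case (Cons z1 zs)
  show ?thesis
  proof (cases "inverse_letters y z1")
    case True
    then have "x = z1" using assms(1) by (cases x; cases y; cases z1) (auto simp: inverse_letters_def)
    moreover have "zs = [] \<or> \<not> inverse_letters z1 (hd zs)" using assms(2) Cons by (simp add: reduced_Cons)
    ultimately show ?thesis using Cons True by (cases zs) auto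
  next
    case False then show ?thesis using Cons assms by auto
  qed
qed

lemma foldr_cons_red_step:
  assumes "reduced_word r" "reduced_word w"
  shows "foldr cons_red (cons_red x r) w = cons_red x (foldr cons_red r w)"
proof (cases r)
  case Nil then show ?thesis by simp
next
  case (Cons y ys)
  show ?thesis
  proof (cases "inverse_letters x y")
    case True
    have "reduced_word ys" using assms Cons by (simp add: reduced_Cons)
    then have "reduced_word (foldr cons_red ys w)" using assms reduced_foldr by blast
    then show ?thesis using Cons True cons_red_cancel by simp
  qed (use Cons in simp)
qed

lemma foldr_assoc:
  assumes "reduced_word v" "reduced_word w"
  shows "foldr cons_red (foldr cons_red u v) w = foldr cons_red u (foldr cons_red v w)"
  using assms
proof (induction u)
  case Nil then show ?case by simp
next
  case (Cons x u)
  then show ?case using foldr_cons_red_step[of "foldr cons_red u v" w x] reduced_foldr by simp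
qed

lemma group_free_group2: "group free_group2"
proof (rule groupI)
  fix x assume x: "x \<in> carrier free_group2"
  define y where "y = foldr cons_red (rev (map (\<lambda>l. (\<not> fst l, snd l)) x)) []"
  have "foldr cons_red (rev (map (\<lambda>l. (\<not> fst l, snd l)) x)) x = []" if "reduced_word x" for x
    using that
  proof (induction x)
    case (Cons a x)
    have "reduced_word x" using Cons.prems by (simp add: reduced_Cons)
    then show ?case using Cons by (simp add: inverse_letters_def)
  qed simp
  then have "foldr cons_red y x = []" unfolding y_def using foldr_assoc[of "[]" x] x
    by (simp add: free_group2_def)
  then show "\<exists>y\<in>carrier free_group2. y \<otimes>\<^bsub>free_group2\<^esub> x = \<one>\<^bsub>free_group2\<^esub>"
    by (intro bexI[of _ y]) (auto simp: free_group2_def y_def reduced_foldr)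
qed (auto simp: free_group2_def reduced_foldr foldr_assoc)

lemma gens_carrier: "gen_a \<in> carrier free_group2" "gen_b \<in> carrier free_group2"
  by (auto simp: free_group2_def gen_a_def gen_b_def reduced_word_def)


context group begin

lemma cancel1[simp]: "x \<in> carrier G \<Longrightarrow> y \<in> carrier G \<Longrightarrow> x \<otimes> (inv x \<otimes> y) = y"
  by (simp add: m_assoc[symmetric])
lemma cancel2[simp]: "x \<in> carrier G \<Longrightarrow> y \<in> carrier G \<Longrightarrow> inv x \<otimes> (x \<otimes> y) = y"
  by (simp add: m_assoc[symmetric])

lemmas gsimps = m_assoc inv_mult_group comm_def

lemma comm_closed[simp]: "x \<in> carrier G \<Longrightarrow> y \<in> carrier G \<Longrightarrow> comm G x y \<in> carrier G"
  by (simp add: comm_def)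

lemma comm_swap: "x \<in> carrier G \<Longrightarrow> y \<in> carrier G \<Longrightarrow> comm G x y = inv (comm G y x)"
  by (simp add: gsimps)

lemma hall_witt:
  assumes "x \<in> carrier G" "y \<in> carrier G" "z \<in> carrier G"
  shows "(inv y \<otimes> comm G (comm G x (inv y)) z \<otimes> y) \<otimes> (inv z \<otimes> comm G (comm G y (inv z)) x \<otimes> z)
     \<otimes> (inv x \<otimes> comm G (comm G z (inv x)) y \<otimes> x) = \<one>"
  using assms by (simp add: gsimps)

lemma comm_conj: "x \<in> carrier G \<Longrightarrow> y \<in> carrier G \<Longrightarrow> g \<in> carrier G \<Longrightarrow>
   g \<otimes> comm G x y \<otimes> inv g = comm G (g \<otimes> x \<otimes> inv g) (g \<otimes> y \<otimes> inv g)"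
  by (simp add: gsimps)

lemma comm_mult_right: "x \<in> carrier G \<Longrightarrow> y \<in> carrier G \<Longrightarrow> z \<in> carrier G \<Longrightarrow>
   comm G x (y \<otimes> z) = comm G x z \<otimes> (inv z \<otimes> comm G x y \<otimes> z)"
  by (simp add: gsimps)

lemma comm_mult_left: "x \<in> carrier G \<Longrightarrow> y \<in> carrier G \<Longrightarrow> z \<in> carrier G \<Longrightarrow>
   comm G (x \<otimes> y) z = (inv y \<otimes> comm G x z \<otimes> y) \<otimes> comm G y z"
  by (simp add: gsimps)

lemma comm_inv_right: "x \<in> carrier G \<Longrightarrow> y \<in> carrier G \<Longrightarrow>
   comm G x (inv y) = y \<otimes> inv (comm G x y) \<otimes> inv y"
  by (simp add: gsimps)

lemma comm_inv_left: "x \<in> carrier G \<Longrightarrow> y \<in> carrier G \<Longrightarrow>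
   comm G (inv x) y = x \<otimes> inv (comm G x y) \<otimes> inv x"
  by (simp add: gsimps)

lemma conj_by_comm: "x \<in> carrier G \<Longrightarrow> z \<in> carrier G \<Longrightarrow> inv z \<otimes> x \<otimes> z = x \<otimes> comm G x z"
  by (simp add: gsimps)

definition "Sc k = {comm G x y | x y. x \<in> lcs G k \<and> y \<in> carrier G}"

lemma lcs_Suc: "1 \<le> k \<Longrightarrow> lcs G (Suc k) = generate G (Sc k)"
  by (cases k) (auto simp: Sc_def)

declare lcs.simps(3)[simp del]

lemma lcs_normal_sub: "lcs G k \<lhd> G \<and> lcs G k \<subseteq> carrier G"
proof (induction k rule: nat_less_induct)
  case (1 k)
  show ?case
  proof (cases "k \<le> 1")
    case True
    then have "lcs G k = carrier G" by (cases k) auto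
    then show ?thesis by (simp add: normal_inv_iff subgroup_self)
  next
    case False
    then obtain j where j: "k = Suc j" "1 \<le> j" by (cases k) auto
    then have IH: "lcs G j \<lhd> G" "lcs G j \<subseteq> carrier G" using 1 by auto
    have S: "Sc j \<subseteq> carrier G" using IH by (auto simp: Sc_def)
    have "generate G (Sc j) \<lhd> G"
    proof (rule normal_generateI[OF S])
      fix h g assume h: "h \<in> Sc j" and g: "g \<in> carrier G"
      then obtain x y where xy: "h = comm G x y" "x \<in> lcs G j" "y \<in> carrier G" by (auto simp: Sc_def)
      have x: "x \<in> carrier G" using xy IH by auto
      have "g \<otimes> x \<otimes> inv g \<in> lcs G j" using IH(1) xy g by (simp add: normal_inv_iff)
      then show "g \<otimes> h \<otimes> inv g \<in> Sc j" using xy x g comm_conj unfolding Sc_def by fastforce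
    qed
    moreover have "generate G (Sc j) \<subseteq> carrier G"
      using subgroup.subset[OF generate_is_subgroup[OF S]] .
    ultimately show ?thesis using j lcs_Suc by simp
  qed
qed

lemma lcs_normal: "lcs G k \<lhd> G" using lcs_normal_sub by (rule conjunct1)
lemma lcs_sub: "lcs G k \<subseteq> carrier G" using lcs_normal_sub by (rule conjunct2)
lemma lcs_carrier: "x \<in> lcs G k \<Longrightarrow> x \<in> carrier G" using lcs_sub by (rule subsetD)
lemma lcs_subgroup: "subgroup (lcs G k) G" using lcs_normal by (rule normal_imp_subgroup)

lemma lcs_conj: "x \<in> lcs G k \<Longrightarrow> g \<in> carrier G \<Longrightarrow> g \<otimes> x \<otimes> inv g \<in> lcs G k"
  using lcs_normal[of k] unfolding normal_inv_iff by blast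
lemma lcs_conj': "x \<in> lcs G k \<Longrightarrow> g \<in> carrier G \<Longrightarrow> inv g \<otimes> x \<otimes> g \<in> lcs G k"
  by (metis inv_closed inv_inv lcs_conj)
lemma lcs_mult: "x \<in> lcs G k \<Longrightarrow> y \<in> lcs G k \<Longrightarrow> x \<otimes> y \<in> lcs G k"
  by (rule subgroup.m_closed[OF lcs_subgroup])
lemma lcs_inv: "x \<in> lcs G k \<Longrightarrow> inv x \<in> lcs G k"
  by (rule subgroup.m_inv_closed[OF lcs_subgroup])
lemma lcs_one: "\<one> \<in> lcs G k"
  by (rule subgroup.one_closed[OF lcs_subgroup])

lemma lcs_Suc_sub: "lcs G (Suc k) \<subseteq> lcs G k"
proof (induction k)
  case 0 then show ?case by simp
next
  case (Suc k)
  show ?case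
  proof (cases "k = 0")
    case True then show ?thesis using lcs_sub[of "Suc (Suc 0)"] by simp
  next
    case False
    then have "Sc (Suc k) \<subseteq> Sc k" using Suc by (auto simp: Sc_def)
    then show ?thesis using False lcs_Suc[of k] lcs_Suc[of "Suc k"] mono_generate by simp
  qed
qed

lemma lcs_anti: "i \<le> j \<Longrightarrow> lcs G j \<subseteq> lcs G i"
  by (induction j rule: dec_induct) (use lcs_Suc_sub in auto)

lemma comm_mem: "1 \<le> k \<Longrightarrow> x \<in> lcs G k \<Longrightarrow> g \<in> carrier G \<Longrightarrow> comm G x g \<in> lcs G (Suc k)"
  using lcs_Suc[of k] generate.incl[of _ "Sc k" G] by (auto simp: Sc_def)

lemma comm_mem': assumes "1 \<le> k" "x \<in> lcs G k" "g \<in> carrier G" shows "comm G g x \<in> lcs G (Suc k)"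
proof -
  have "comm G g x = inv (comm G x g)" using comm_swap[of g x] lcs_carrier[of x k] assms by simp
  then show ?thesis using comm_mem[of k x g] lcs_inv assms by simp
qed

lemma lcs_comm_aux:
  "\<forall>i x y. 1 \<le> i \<longrightarrow> x \<in> lcs G i \<longrightarrow> y \<in> lcs G (Suc j) \<longrightarrow> comm G x y \<in> lcs G (i + Suc j)"
proof (induction j)
  case 0 then show ?case using comm_mem by simp
next
  case (Suc j)
  show ?case
  proof (intro allI impI)
    fix i x y assume i: "1 \<le> i" and x: "x \<in> lcs G i" and y: "y \<in> lcs G (Suc (Suc j))"
    have xc: "x \<in> carrier G" using x by (rule lcs_carrier)
    define T where "T = {y \<in> carrier G. comm G x y \<in> lcs G (i + Suc (Suc j))}"
    have sgT: "subgroup T G"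
    proof (rule subgroupI)
      show "T \<subseteq> carrier G" by (auto simp: T_def)
      show "T \<noteq> {}" using xc by (auto simp: T_def comm_def lcs_one intro!: exI[of _ \<one>])
    next
      fix a assume "a \<in> T"
      then have a: "a \<in> carrier G" "comm G x a \<in> lcs G (i + Suc (Suc j))" by (auto simp: T_def)
      have "a \<otimes> inv (comm G x a) \<otimes> inv a \<in> lcs G (i + Suc (Suc j))"
        by (rule lcs_conj[OF lcs_inv[OF a(2)] a(1)])
      then show "inv a \<in> T" using xc a comm_inv_right[of x a] by (simp add: T_def)
    next
      fix a b assume "a \<in> T" "b \<in> T"
      then have a: "a \<in> carrier G" "comm G x a \<in> lcs G (i + Suc (Suc j))"
        and b: "b \<in> carrier G" "comm G x b \<in> lcs G (i + Suc (Suc j))" by (auto simp: T_def)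
      have "comm G x b \<otimes> (inv b \<otimes> comm G x a \<otimes> b) \<in> lcs G (i + Suc (Suc j))"
        by (rule lcs_mult[OF b(2) lcs_conj'[OF a(2) b(1)]])
      then show "a \<otimes> b \<in> T" using xc a b comm_mult_right[of x a b] by (simp add: T_def)
    qed
    moreover have ScT: "Sc (Suc j) \<subseteq> T"
    proof
      fix h assume "h \<in> Sc (Suc j)"
      then obtain w g where h: "h = comm G w g" "w \<in> lcs G (Suc j)" "g \<in> carrier G"
        by (auto simp: Sc_def)
      have wc: "w \<in> carrier G" using h(2) by (rule lcs_carrier)
      have t2: "comm G (comm G (inv g) (inv x)) w \<in> lcs G (i + Suc (Suc j))"
      proof -
        have "inv x \<in> lcs G i" by (rule lcs_inv[OF x])
        then have c1: "comm G (inv g) (inv x) \<in> lcs G (Suc i)" by (rule comm_mem'[OF i _ inv_closed[OF h(3)]])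
        have "comm G (comm G (inv g) (inv x)) w \<in> lcs G (Suc i + Suc j)"
          by (rule Suc.IH[rule_format, OF _ c1 h(2)]) simp
        then show ?thesis by simp
      qed
      have t3: "comm G (comm G x (inv w)) (inv g) \<in> lcs G (i + Suc (Suc j))"
      proof -
        have "inv w \<in> lcs G (Suc j)" by (rule lcs_inv[OF h(2)])
        then have c1: "comm G x (inv w) \<in> lcs G (i + Suc j)" by (rule Suc.IH[rule_format, OF i x])
        have "comm G (comm G x (inv w)) (inv g) \<in> lcs G (Suc (i + Suc j))"
          by (rule comm_mem[OF _ c1 inv_closed[OF h(3)]]) simp
        then show ?thesis by simp
      qed
      let ?A = "comm G (comm G w g) x"
      have HW: "(g \<otimes> ?A \<otimes> inv g) \<otimes> (inv x \<otimes> comm G (comm G (inv g) (inv x)) w \<otimes> x)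
          \<otimes> (inv w \<otimes> comm G (comm G x (inv w)) (inv g) \<otimes> w) = \<one>"
        using hall_witt[of w "inv g" x] wc xc h by simp
      have P2: "(inv x \<otimes> comm G (comm G (inv g) (inv x)) w \<otimes> x) \<otimes> (inv w \<otimes> comm G (comm G x (inv w)) (inv g) \<otimes> w)
         \<in> lcs G (i + Suc (Suc j))"
        by (rule lcs_mult[OF lcs_conj'[OF t2 xc] lcs_conj'[OF t3 wc]])
      have eqA: "g \<otimes> ?A \<otimes> inv g = inv ((inv x \<otimes> comm G (comm G (inv g) (inv x)) w \<otimes> x) \<otimes> (inv w \<otimes> comm G (comm G x (inv w)) (inv g) \<otimes> w))"
        using HW xc wc h by (intro inv_equality[symmetric]) (simp_all add: m_assoc)
      have "g \<otimes> ?A \<otimes> inv g \<in> lcs G (i + Suc (Suc j))" unfolding eqA by (rule lcs_inv[OF P2])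
      then have "inv g \<otimes> (g \<otimes> ?A \<otimes> inv g) \<otimes> g \<in> lcs G (i + Suc (Suc j))" by (rule lcs_conj'[OF _ h(3)])
      then have "?A \<in> lcs G (i + Suc (Suc j))" using h wc xc by (simp add: m_assoc)
      then have "inv ?A \<in> lcs G (i + Suc (Suc j))" by (rule lcs_inv)
      then have "comm G x h \<in> lcs G (i + Suc (Suc j))"
        using comm_swap[of x h] h wc xc by simp
      then show "h \<in> T" using h wc by (simp add: T_def)
    qed
    have "generate G (Sc (Suc j)) \<subseteq> T" by (rule generate_subgroup_incl[OF ScT sgT])
    then show "comm G x y \<in> lcs G (i + Suc (Suc j))" using y lcs_Suc[of "Suc j"] by (auto simp: T_def)
  qed
qed

lemma lcs_comm: "1 \<le> i \<Longrightarrow> 1 \<le> j \<Longrightarrow> x \<in> lcs G i \<Longrightarrow> y \<in> lcs G j \<Longrightarrow> comm G x y \<in> lcs G (i + j)"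
  using lcs_comm_aux[of "j - 1"] by simp

lemma iter_comm_mem: "a \<in> carrier G \<Longrightarrow> b \<in> carrier G \<Longrightarrow> iter_comm G a b i \<in> lcs G (Suc i)"
proof (induction i)
  case (Suc i) then show ?case by (simp only: iter_comm.simps) (rule comm_mem, simp_all)
qed simp


end


context group begin

lemma conj_triv: "a \<in> carrier G \<Longrightarrow> b \<in> carrier G \<Longrightarrow> a \<otimes> b = b \<otimes> a \<Longrightarrow> inv b \<otimes> a \<otimes> b = a"
  by (simp add: m_assoc)

lemma comm_triv: "a \<in> carrier G \<Longrightarrow> b \<in> carrier G \<Longrightarrow> a \<otimes> b = b \<otimes> a \<Longrightarrow> comm G a b = \<one>"
  using conj_triv[of a b] by (simp add: comm_def m_assoc)

lemma comm_deriv: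
  assumes u: "u \<in> carrier G" and v: "v \<in> carrier G" and w: "w \<in> carrier G"
  and h1: "comm G u v \<otimes> comm G v w = comm G v w \<otimes> comm G u v"
  and h2: "comm G (comm G u w) (comm G v w) = \<one>"
  and h3: "comm G (comm G u w) v \<otimes> comm G v w = comm G v w \<otimes> comm G (comm G u w) v"
  and h4: "comm G u (comm G v w) \<otimes> comm G u w = comm G u w \<otimes> comm G u (comm G v w)"
  and h5: "comm G u v \<otimes> comm G u w = comm G u w \<otimes> comm G u v"
  and h6: "comm G u (comm G v w) \<otimes> comm G u v = comm G u v \<otimes> comm G u (comm G v w)"
  and h7: "comm G u (comm G v w) \<otimes> comm G (comm G u w) v = comm G (comm G u w) v \<otimes> comm G u (comm G v w)"
  shows "comm G (comm G u v) w = comm G (comm G u w) v \<otimes> comm G u (comm G v w)"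
proof -
  define u1 where "u1 = comm G u w"
  define v1 where "v1 = comm G v w"
  define C where "C = comm G u v"
  define D1 where "D1 = comm G u v1"
  define D2 where "D2 = comm G u1 v"
  have c: "u1 \<in> carrier G" "v1 \<in> carrier G" "C \<in> carrier G" "D1 \<in> carrier G" "D2 \<in> carrier G"
    using u v w by (simp_all add: u1_def v1_def C_def D1_def D2_def)
  have s1: "inv w \<otimes> C \<otimes> w = comm G (u \<otimes> u1) (v \<otimes> v1)"
    using u v w by (simp add: u1_def v1_def C_def gsimps)
  have s2: "comm G (u \<otimes> u1) (v \<otimes> v1) = (inv u1 \<otimes> comm G u (v \<otimes> v1) \<otimes> u1) \<otimes> comm G u1 (v \<otimes> v1)"
    using u v c by (simp add: comm_mult_left)
  have s3: "comm G u (v \<otimes> v1) = D1 \<otimes> C"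
    using comm_mult_right[of u v v1] conj_triv[of C v1] h1 u v c by (simp add: C_def v1_def D1_def)
  have s4: "comm G u1 (v \<otimes> v1) = D2"
    using comm_mult_right[of u1 v v1] conj_triv[of D2 v1] h2 h3 u v c by (simp add: u1_def v1_def D2_def)
  have s5: "inv u1 \<otimes> (D1 \<otimes> C) \<otimes> u1 = D1 \<otimes> C"
  proof -
    have e4: "D1 \<otimes> u1 = u1 \<otimes> D1" using h4 by (simp add: u1_def v1_def D1_def)
    have e5: "C \<otimes> u1 = u1 \<otimes> C" using h5 by (simp add: u1_def C_def)
    have "(D1 \<otimes> C) \<otimes> u1 = D1 \<otimes> (C \<otimes> u1)" using c by (simp add: m_assoc)
    also have "\<dots> = (D1 \<otimes> u1) \<otimes> C" using c e5 by (simp add: m_assoc)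
    also have "\<dots> = u1 \<otimes> (D1 \<otimes> C)" using c e4 by (simp add: m_assoc)
    finally have "(D1 \<otimes> C) \<otimes> u1 = u1 \<otimes> (D1 \<otimes> C)" .
    then show ?thesis using conj_triv c by simp
  qed
  have s6: "comm G C w = inv C \<otimes> (inv w \<otimes> C \<otimes> w)"
    using c w by (simp add: gsimps)
  have "comm G C w = inv C \<otimes> (D1 \<otimes> C \<otimes> D2)"
    using s6 s1 s2 s3 s4 s5 by simp
  also have "\<dots> = inv C \<otimes> (C \<otimes> D1 \<otimes> D2)"
    using h6 by (simp add: D1_def C_def v1_def)
  also have "\<dots> = D1 \<otimes> D2" using c by (simp add: m_assoc)
  also have "\<dots> = D2 \<otimes> D1" using h7 by (simp add: D1_def D2_def u1_def v1_def)
  finally show ?thesis by (simp add: C_def D1_def D2_def u1_def v1_def)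
qed

end


lemma (in group) comm_one_commute:
  assumes "a \<in> carrier G" "b \<in> carrier G" "comm G a b = \<one>" shows "a \<otimes> b = b \<otimes> a"
proof -
  have "b \<otimes> a \<otimes> comm G a b = a \<otimes> b" using assms(1,2) by (simp add: gsimps)
  then show ?thesis using assms by simp
qed

lemma (in monoid) foldr_mult_acc:
  "(\<And>x. x \<in> set xs \<Longrightarrow> f x \<in> carrier G) \<Longrightarrow> a \<in> carrier G \<Longrightarrow>
   foldr (\<lambda>x acc. f x \<otimes> acc) xs a = foldr (\<lambda>x acc. f x \<otimes> acc) xs \<one> \<otimes> a
   \<and> foldr (\<lambda>x acc. f x \<otimes> acc) xs \<one> \<in> carrier G"
  by (induction xs) (auto simp: m_assoc)

lemma (in group) ordered_prod_closed: "set xs \<subseteq> carrier G \<Longrightarrow> ordered_prod G xs \<in> carrier G"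
  by (induction xs) (auto simp: ordered_prod_def)

lemma ordered_prod_Cons: "ordered_prod G (x # xs) = x \<otimes>\<^bsub>G\<^esub> ordered_prod G xs"
  by (simp add: ordered_prod_def)

lemma (in group_hom) hom_comm: "x \<in> carrier G \<Longrightarrow> y \<in> carrier G \<Longrightarrow> h (comm G x y) = comm H (h x) (h y)"
  by (simp add: comm_def)

lemma (in group) ordered_prod_mem: "set xs \<subseteq> lcs G k \<Longrightarrow> ordered_prod G xs \<in> lcs G k"
  by (induction xs) (auto simp: ordered_prod_def lcs_one intro: lcs_mult)


context group_hom begin

lemma main_mod:
  assumes a: "a \<in> carrier G" and b: "b \<in> carrier G"
    and ker: "\<And>x. x \<in> lcs G (2 * n + 3) \<Longrightarrow> h x = \<one>\<^bsub>H\<^esub>"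
  shows "h (comm G (iter_comm G a b (2 * n)) a) =
         h (comm G
              (ordered_prod G
                 (map (\<lambda>i. let c = comm G
                                    (iter_comm G a b (2 * n - 1 - i))
                                    (iter_comm G a b i)
                           in if even i then c else inv\<^bsub>G\<^esub> c)
                    [0..<n]))
              b)"
proof -
  let ?u = "iter_comm G a b"
  have uc: "\<And>i. ?u i \<in> carrier G" and ul: "\<And>i. ?u i \<in> lcs G (Suc i)"
    using a b G.iter_comm_mem G.lcs_carrier by blast+
  have commN: "h x \<otimes>\<^bsub>H\<^esub> h y = h y \<otimes>\<^bsub>H\<^esub> h x"
    if "x \<in> carrier G" "y \<in> carrier G" "comm G x y \<in> lcs G (2 * n + 3)" for x y
  proof -
    have e: "comm H (h x) (h y) = \<one>\<^bsub>H\<^esub>" using ker[OF that(3)] hom_comm[OF that(1,2)] by simp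
    show ?thesis by (rule H.comm_one_commute[OF _ _ e]) (use that in simp_all)
  qed
  have lvl: "comm G x y \<in> lcs G r"
    if "x \<in> lcs G p" "y \<in> lcs G q" "1 \<le> p" "1 \<le> q" "r \<le> p + q" for x y p q r
    using G.lcs_comm[OF that(3,4,1,2)] G.lcs_anti[OF that(5)] by blast
  have cen: "h x \<otimes>\<^bsub>H\<^esub> h g = h g \<otimes>\<^bsub>H\<^esub> h x"
    if "x \<in> lcs G (2 * n + 2)" "g \<in> carrier G" for x g
  proof (rule commN)
    show "x \<in> carrier G" using that G.lcs_carrier by blast
    show "comm G x g \<in> lcs G (2 * n + 3)" using G.comm_mem[OF _ that(1) that(2)] by (simp add: numeral_3_eq_3)
  qed (use that in auto)
  define D where "D i = h (comm G (?u (2 * n - i)) (?u i))" for i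
  have DK: "comm G (?u (2 * n - i)) (?u i) \<in> lcs G (2 * n + 2)" if "i \<le> 2 * n" for i
    by (rule lvl[OF ul ul]) (use that in auto)
  have Dc: "D i \<in> carrier H" for i unfolding D_def using uc by simp
  have Dcen: "D i \<otimes>\<^bsub>H\<^esub> h g = h g \<otimes>\<^bsub>H\<^esub> D i" if "i \<le> 2 * n" "g \<in> carrier G" for i g
    unfolding D_def by (rule cen[OF DK[OF that(1)] that(2)])

  have stepB: "h (comm G (comm G (?u (2 * n - 1 - i)) (?u i)) b) = D i \<otimes>\<^bsub>H\<^esub> D (Suc i)" if "i < n" for i
  proof -
    define j where "j = 2 * n - 1 - i"
    have j1: "2 * n - i = Suc j" and j2: "2 * n - Suc i = j" using that by (auto simp: j_def)
    have cxy: "comm G (?u j) (?u i) \<in> lcs G (2 * n + 1)" by (rule lvl[OF ul ul]) (use that j_def in auto)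
    have N1: "comm G (comm G (?u j) (?u i)) (?u (Suc i)) \<in> lcs G (2 * n + 3)" by (rule lvl[OF cxy ul]) auto
    have N5: "comm G (comm G (?u j) (?u i)) (?u (Suc j)) \<in> lcs G (2 * n + 3)" by (rule lvl[OF cxy ul]) auto
    have N2: "comm G (?u (Suc j)) (?u (Suc i)) \<in> lcs G (2 * n + 3)" by (rule lvl[OF ul ul]) (use that j_def in auto)
    have K3: "comm G (?u (Suc j)) (?u i) \<in> lcs G (2 * n + 2)" by (rule lvl[OF ul ul]) (use that j_def in auto)
    have K4: "comm G (?u j) (?u (Suc i)) \<in> lcs G (2 * n + 2)" by (rule lvl[OF ul ul]) (use that j_def in auto)
    have f1: "h (comm G (?u j) (?u i)) \<otimes>\<^bsub>H\<^esub> h (?u (Suc i)) = h (?u (Suc i)) \<otimes>\<^bsub>H\<^esub> h (comm G (?u j) (?u i))"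
      by (rule commN[OF _ _ N1]) (simp_all add: uc b)
    have f5: "h (comm G (?u j) (?u i)) \<otimes>\<^bsub>H\<^esub> h (?u (Suc j)) = h (?u (Suc j)) \<otimes>\<^bsub>H\<^esub> h (comm G (?u j) (?u i))"
      by (rule commN[OF _ _ N5]) (simp_all add: uc b)
    have f2: "h (comm G (?u (Suc j)) (?u (Suc i))) = \<one>\<^bsub>H\<^esub>" by (rule ker[OF N2])
    have f3: "h (comm G (?u (Suc j)) (?u i)) \<otimes>\<^bsub>H\<^esub> h (?u (Suc i)) = h (?u (Suc i)) \<otimes>\<^bsub>H\<^esub> h (comm G (?u (Suc j)) (?u i))"
      by (rule cen[OF K3 uc])
    have f4: "h (comm G (?u j) (?u (Suc i))) \<otimes>\<^bsub>H\<^esub> h (?u (Suc j)) = h (?u (Suc j)) \<otimes>\<^bsub>H\<^esub> h (comm G (?u j) (?u (Suc i)))"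
      by (rule cen[OF K4 uc])
    have f6: "h (comm G (?u j) (?u (Suc i))) \<otimes>\<^bsub>H\<^esub> h (comm G (?u j) (?u i)) = h (comm G (?u j) (?u i)) \<otimes>\<^bsub>H\<^esub> h (comm G (?u j) (?u (Suc i)))"
      by (rule cen[OF K4]) (simp add: uc b)
    have f7: "h (comm G (?u j) (?u (Suc i))) \<otimes>\<^bsub>H\<^esub> h (comm G (?u (Suc j)) (?u i)) = h (comm G (?u (Suc j)) (?u i)) \<otimes>\<^bsub>H\<^esub> h (comm G (?u j) (?u (Suc i)))"
      by (rule cen[OF K4]) (simp add: uc b)
    have hc: "\<And>x y. x \<in> carrier G \<Longrightarrow> y \<in> carrier G \<Longrightarrow> comm H (h x) (h y) = h (comm G x y)"
      using hom_comm by simp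
    have R: "comm H (comm H (h (?u j)) (h (?u i))) (h b) =
        comm H (comm H (h (?u j)) (h b)) (h (?u i)) \<otimes>\<^bsub>H\<^esub> comm H (h (?u j)) (comm H (h (?u i)) (h b))"
      apply (rule H.comm_deriv)
      subgoal by (simp add: uc b)
      subgoal by (simp add: uc b)
      subgoal by (simp add: uc b)
      subgoal using f1 by (simp add: hc uc b)
      subgoal using f2 by (simp add: hc uc b)
      subgoal using f3 by (simp add: hc uc b)
      subgoal using f4 by (simp add: hc uc b)
      subgoal using f5 by (simp add: hc uc b)
      subgoal using f6 by (simp add: hc uc b)
      subgoal using f7 by (simp add: hc uc b)
      done
    have R': "h (comm G (comm G (?u j) (?u i)) b) = h (comm G (?u (Suc j)) (?u i)) \<otimes>\<^bsub>H\<^esub> h (comm G (?u j) (?u (Suc i)))"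
      using R by (simp add: hc uc b)
    show ?thesis unfolding D_def j1 j2 j_def[symmetric] by (rule R')
  qed

  have hc: "\<And>x y. x \<in> carrier G \<Longrightarrow> y \<in> carrier G \<Longrightarrow> comm H (h x) (h y) = h (comm G x y)"
    using hom_comm by simp
  have cK: "comm G c b \<in> lcs G (2 * n + 2)" if "c \<in> lcs G (2 * n + 1)" for c
    using G.comm_mem[OF _ that b] by simp
  define e where "e = (\<lambda>i. let c = comm G (?u (2 * n - 1 - i)) (?u i) in if even i then c else inv c)"
  have cL: "comm G (?u (2 * n - 1 - i)) (?u i) \<in> lcs G (2 * n + 1)" if "i < n" for i
    by (rule lvl[OF ul ul]) (use that in auto)
  have eL: "e i \<in> lcs G (2 * n + 1)" if "i < n" for i
    using cL[OF that] G.lcs_inv by (simp add: e_def Let_def)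
  have stepInv: "h (comm G (inv c) b) = inv\<^bsub>H\<^esub> (h (comm G c b))" if "c \<in> lcs G (2 * n + 1)" for c
  proof -
    have c: "c \<in> carrier G" using that G.lcs_carrier by blast
    have com: "h (comm G c b) \<otimes>\<^bsub>H\<^esub> h c = h c \<otimes>\<^bsub>H\<^esub> h (comm G c b)" by (rule cen[OF cK[OF that] c])
    have "h c \<otimes>\<^bsub>H\<^esub> h (comm G c b) \<otimes>\<^bsub>H\<^esub> inv\<^bsub>H\<^esub> (h c) = h (comm G c b)"
      using com[symmetric] c b by (simp add: H.m_assoc)
    then have "inv\<^bsub>H\<^esub> (h c \<otimes>\<^bsub>H\<^esub> h (comm G c b) \<otimes>\<^bsub>H\<^esub> inv\<^bsub>H\<^esub> (h c)) = inv\<^bsub>H\<^esub> (h (comm G c b))" by simp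
    then have "h c \<otimes>\<^bsub>H\<^esub> inv\<^bsub>H\<^esub> (h (comm G c b)) \<otimes>\<^bsub>H\<^esub> inv\<^bsub>H\<^esub> (h c) = inv\<^bsub>H\<^esub> (h (comm G c b))"
      using c b by (simp add: H.inv_mult_group H.m_assoc)
    then show ?thesis using G.comm_inv_left[OF c b] c b by simp
  qed
  have Ee: "h (comm G (e i) b) = (if even i then D i \<otimes>\<^bsub>H\<^esub> D (Suc i) else inv\<^bsub>H\<^esub> (D i \<otimes>\<^bsub>H\<^esub> D (Suc i)))"
    if "i < n" for i
    using stepB[OF that] stepInv[OF cL[OF that]] by (simp add: e_def Let_def)
  have stepA: "h (comm G (ordered_prod G xs) b) = foldr (\<lambda>x acc. h (comm G x b) \<otimes>\<^bsub>H\<^esub> acc) xs \<one>\<^bsub>H\<^esub>"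
    if "set xs \<subseteq> lcs G (2 * n + 1)" for xs
    using that
  proof (induction xs)
    case Nil
    then show ?case using b by (simp add: ordered_prod_def comm_def G.m_assoc)
  next
    case (Cons x xs)
    have x: "x \<in> lcs G (2 * n + 1)" and xs: "set xs \<subseteq> lcs G (2 * n + 1)" using Cons.prems by auto
    have xc: "x \<in> carrier G" using x G.lcs_carrier by blast
    have P: "ordered_prod G xs \<in> carrier G" using G.ordered_prod_mem[OF xs] G.lcs_carrier by blast
    have com: "h (comm G x b) \<otimes>\<^bsub>H\<^esub> h (ordered_prod G xs) = h (ordered_prod G xs) \<otimes>\<^bsub>H\<^esub> h (comm G x b)"
      by (rule cen[OF cK[OF x] P])
    have "h (comm G (ordered_prod G (x # xs)) b)
        = (inv\<^bsub>H\<^esub> (h (ordered_prod G xs)) \<otimes>\<^bsub>H\<^esub> h (comm G x b) \<otimes>\<^bsub>H\<^esub> h (ordered_prod G xs)) \<otimes>\<^bsub>H\<^esub> h (comm G (ordered_prod G xs) b)"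
      using G.comm_mult_left[OF xc P b] xc P b by (simp add: ordered_prod_Cons)
    also have "inv\<^bsub>H\<^esub> (h (ordered_prod G xs)) \<otimes>\<^bsub>H\<^esub> h (comm G x b) \<otimes>\<^bsub>H\<^esub> h (ordered_prod G xs) = h (comm G x b)"
      by (rule H.conj_triv[OF _ _ com]) (use xc P b in simp_all)
    finally show ?case using Cons.IH[OF xs] by simp
  qed
  have tel: "foldr (\<lambda>x acc. h (comm G x b) \<otimes>\<^bsub>H\<^esub> acc) (map e [0..<k]) \<one>\<^bsub>H\<^esub>
      = D 0 \<otimes>\<^bsub>H\<^esub> (if even k then inv\<^bsub>H\<^esub> (D k) else D k)" if "k \<le> n" for k
    using that
  proof (induction k)
    case 0
    then show ?case using Dc by simp
  next
    case (Suc k)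
    have ec: "\<And>x. x \<in> set (map e [0..<k]) \<Longrightarrow> h (comm G x b) \<in> carrier H"
    proof -
      fix x assume "x \<in> set (map e [0..<k])"
      then obtain i where "i < k" "x = e i" by auto
      then have "x \<in> carrier G" using eL[of i] Suc.prems G.lcs_carrier by auto
      then show "h (comm G x b) \<in> carrier H" using b by simp
    qed
    have Ekc: "h (comm G (e k) b) \<in> carrier H"
      using eL[of k] Suc.prems G.lcs_carrier b by auto
    have "foldr (\<lambda>x acc. h (comm G x b) \<otimes>\<^bsub>H\<^esub> acc) (map e [0..<Suc k]) \<one>\<^bsub>H\<^esub>
        = foldr (\<lambda>x acc. h (comm G x b) \<otimes>\<^bsub>H\<^esub> acc) (map e [0..<k]) (h (comm G (e k) b))"
      using Ekc by simp
    also have "\<dots> = foldr (\<lambda>x acc. h (comm G x b) \<otimes>\<^bsub>H\<^esub> acc) (map e [0..<k]) \<one>\<^bsub>H\<^esub> \<otimes>\<^bsub>H\<^esub> h (comm G (e k) b)"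
      using H.foldr_mult_acc[where xs="map e [0..<k]" and f="\<lambda>x. h (comm G x b)", OF ec Ekc] by blast
    also have "\<dots> = D 0 \<otimes>\<^bsub>H\<^esub> (if even k then inv\<^bsub>H\<^esub> (D k) else D k) \<otimes>\<^bsub>H\<^esub>
        (if even k then D k \<otimes>\<^bsub>H\<^esub> D (Suc k) else inv\<^bsub>H\<^esub> (D k \<otimes>\<^bsub>H\<^esub> D (Suc k)))"
      using Suc Ee[of k] by simp
    also have "\<dots> = D 0 \<otimes>\<^bsub>H\<^esub> (if even (Suc k) then inv\<^bsub>H\<^esub> (D (Suc k)) else D (Suc k))"
    proof (cases "even k")
      case True
      then show ?thesis using Dc by (simp add: H.m_assoc)
    next
      case False
      have dk: "D k \<otimes>\<^bsub>H\<^esub> D (Suc k) = D (Suc k) \<otimes>\<^bsub>H\<^esub> D k"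
        unfolding D_def[of "Suc k"] by (rule Dcen) (use Suc.prems in \<open>simp_all add: uc b\<close>)
      have "D k \<otimes>\<^bsub>H\<^esub> inv\<^bsub>H\<^esub> (D k \<otimes>\<^bsub>H\<^esub> D (Suc k)) = inv\<^bsub>H\<^esub> (D (Suc k))"
        unfolding dk using Dc by (simp add: H.inv_mult_group H.m_assoc[symmetric])
      then show ?thesis using False Dc by (simp add: H.m_assoc)
    qed
    finally show ?case .
  qed
  have Dn: "D n = \<one>\<^bsub>H\<^esub>" unfolding D_def using uc by (simp add: comm_def G.m_assoc)
  have LHS: "h (comm G (?u (2 * n)) a) = D 0" by (simp add: D_def)
  have "set (map e [0..<n]) \<subseteq> lcs G (2 * n + 1)" using eL by auto
  then have RHS: "h (comm G (ordered_prod G (map e [0..<n])) b) = D 0"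
    using stepA tel[of n] Dn Dc by simp
  show ?thesis using LHS RHS unfolding e_def by simp
qed


end


lemma free_lcs_normal: "lcs free_group2 k \<lhd> free_group2"
  using group.lcs_normal[OF group_free_group2] .

theorem corollary4p1:
  fixes n :: nat
  assumes "n \<ge> 1"
  shows "cong_mod free_group2 (lcs free_group2 (2 * n + 3))
           (comm free_group2 (iter_comm free_group2 gen_a gen_b (2 * n)) gen_a)
           (comm free_group2
              (ordered_prod free_group2
                 (map (\<lambda>i. let c = comm free_group2
                                    (iter_comm free_group2 gen_a gen_b (2 * n - 1 - i))
                                    (iter_comm free_group2 gen_a gen_b i)
                           in if even i then c else inv\<^bsub>free_group2\<^esub> c)
                    [0..<n]))
              gen_b)"
proof -
  let ?F = free_group2
  let ?N = "lcs ?F (2 * n + 3)"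
  interpret F: group ?F by (rule group_free_group2)
  interpret N: normal ?N ?F by (rule free_lcs_normal)
  have hom: "group_hom ?F (?F Mod ?N) (\<lambda>x. ?N #>\<^bsub>?F\<^esub> x)"
    by (rule group_hom.intro[OF group_free_group2 N.factorgroup_is_group group_hom_axioms.intro[OF N.r_coset_hom_Mod]])
  have ker: "?N #>\<^bsub>?F\<^esub> x = \<one>\<^bsub>?F Mod ?N\<^esub>" if "x \<in> ?N" for x
    using subgroup.rcos_const[OF N.subgroup_axioms group_free_group2 that] by (simp add: FactGroup_def)
  define L where "L = comm free_group2 (iter_comm free_group2 gen_a gen_b (2 * n)) gen_a"
  define R where "R = comm free_group2
              (ordered_prod free_group2
                 (map (\<lambda>i. let c = comm free_group2
                                    (iter_comm free_group2 gen_a gen_b (2 * n - 1 - i))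
                                    (iter_comm free_group2 gen_a gen_b i)
                           in if even i then c else inv\<^bsub>free_group2\<^esub> c)
                    [0..<n]))
              gen_b"
  have eq: "?N #>\<^bsub>?F\<^esub> L = ?N #>\<^bsub>?F\<^esub> R"
    unfolding L_def R_def
    by (rule group_hom.main_mod[OF hom gens_carrier ker])
  have ic: "\<And>i. iter_comm ?F gen_a gen_b i \<in> carrier ?F"
    using F.lcs_carrier[OF F.iter_comm_mem[OF gens_carrier]] .
  have Lc: "L \<in> carrier ?F" and Rc: "R \<in> carrier ?F"
  proof -
    have "set (map (\<lambda>i. let c = comm free_group2
                                    (iter_comm free_group2 gen_a gen_b (2 * n - 1 - i))
                                    (iter_comm free_group2 gen_a gen_b i)
                           in if even i then c else inv\<^bsub>free_group2\<^esub> c)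
                    [0..<n]) \<subseteq> carrier ?F"
      using ic by (auto simp: Let_def)
    then show "R \<in> carrier ?F" unfolding R_def using gens_carrier F.ordered_prod_closed by simp
    show "L \<in> carrier ?F" unfolding L_def using gens_carrier ic by simp
  qed
  have "L \<in> ?N #>\<^bsub>?F\<^esub> R" using F.rcos_self[OF Lc N.subgroup_axioms] eq by simp
  then have "L \<otimes>\<^bsub>?F\<^esub> inv\<^bsub>?F\<^esub> R \<in> ?N"
    by (rule subgroup.rcos_module_imp[OF N.subgroup_axioms group_free_group2 Rc])
  then show ?thesis unfolding cong_mod_def L_def R_def .
qed

end
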